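(* If $N = q^k n^2$ is an odd perfect number given in Eulerian form, then $q < n\sqrt{3}$.
   Context: For a positive integer $x$, $\sigma(x)$ denotes the sum of the positive divisors of $x$. A positive integer $N$ is perfect if $\sigma(N) = 2N$. An odd perfect number $N$ is said to be given in Eulerian form if $N = q^k n^2$ where $q$ is a prime, $q \equiv k \equiv 1 \pmod 4$, $n$ is a positive integer, and $\gcd(q,n) = 1$. *)

theory Defs
  imports Complex_Main "HOL-Computational_Algebra.Primes"
begin

definition sigma :: "nat \<Rightarrow> nat" where
  "sigma x = (\<Sum>d\<in>{d. d dvd x}. d)"

definition perfect :: "nat \<Rightarrow> bool" where
  "perfect N \<longleftrightarrow> N > 0 \<and> sigma N = 2 * N"

definition eulerian_form :: "nat \<Rightarrow> nat \<Rightarrow> nat \<Rightarrow> nat \<Rightarrow> bool" where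
  "eulerian_form N q k n \<longleftrightarrow> N = q ^ k * n ^ 2 \<and> prime q \<and> q mod 4 = 1 \<and> k mod 4 = 1
     \<and> n > 0 \<and> coprime q n"

end

theory Submission
  imports Defs
begin

lemma sigma_one: "sigma 1 = 1"
  by (simp add: sigma_def)

lemma sigma_pos: "x > 0 \<Longrightarrow> sigma x > 0"
proof -
  assume "x > 0"
  hence "finite {d. d dvd x}" by simp
  moreover have "1 \<in> {d. d dvd x}" by simp
  ultimately have "1 \<le> sigma x" unfolding sigma_def
    by (metis member_le_sum zero_le)
  thus ?thesis by simp
qed

lemma sigma_mult:
  assumes "coprime a b" "a > 0" "b > 0"
  shows "sigma (a * b) = sigma a * sigma b"
proof -
  let ?A = "{d. d dvd a}" and ?B = "{d. d dvd b}"
  have eq: "{d. d dvd a * b} = (\<lambda>(x,y). x * y) ` (?A \<times> ?B)"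
  proof
    show "{d. d dvd a * b} \<subseteq> (\<lambda>(x,y). x * y) ` (?A \<times> ?B)"
    proof
      fix d assume "d \<in> {d. d dvd a * b}"
      then obtain x y where "d = x * y" "x dvd a" "y dvd b"
        using division_decomp by blast
      thus "d \<in> (\<lambda>(x,y). x * y) ` (?A \<times> ?B)" by force
    qed
  qed (auto intro: mult_dvd_mono)
  have inj: "inj_on (\<lambda>(x,y). x * y) (?A \<times> ?B)"
  proof (rule inj_onI, clarsimp)
    fix x y x' y' :: nat
    assume h: "x dvd a" "y dvd b" "x' dvd a" "y' dvd b" "x * y = x' * y'"
    have c1: "coprime x y'" "coprime x' y" "coprime x y" "coprime x' y'"
      using h assms(1) coprime_divisors by blast+
    have "x dvd x' * y'" using h(5) by (metis dvd_triv_left)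
    hence "x dvd x'" using c1 by (simp add: coprime_dvd_mult_left_iff)
    moreover have "x' dvd x * y" using h(5) by (metis dvd_triv_left)
    hence "x' dvd x" using c1 by (simp add: coprime_dvd_mult_left_iff)
    ultimately have "x = x'" by (simp add: dvd_antisym)
    moreover have "y dvd x' * y'" using h(5) by (metis dvd_triv_right)
    hence "y dvd y'" using c1 by (metis coprime_commute coprime_dvd_mult_right_iff)
    moreover have "y' dvd x * y" using h(5) by (metis dvd_triv_right)
    hence "y' dvd y" using c1 by (metis coprime_commute coprime_dvd_mult_right_iff)
    ultimately show "x = x' \<and> y = y'" by (simp add: dvd_antisym)
  qed
  have "sigma (a*b) = (\<Sum>p\<in>?A \<times> ?B. (\<lambda>(x,y). x * y) p)"
    unfolding sigma_def eq by (subst sum.reindex[OF inj]) simp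
  also have "\<dots> = (\<Sum>x\<in>?A. \<Sum>y\<in>?B. x * y)"
    by (rule sum.cartesian_product[symmetric])
  also have "\<dots> = sigma a * sigma b"
    unfolding sigma_def by (simp add: sum_product)
  finally show ?thesis .
qed

lemma sigma_primepow:
  assumes "prime p"
  shows "sigma (p ^ j) = (\<Sum>i\<le>j. p ^ i)"
proof -
  have eq: "{d. d dvd p ^ j} = (\<lambda>i. p ^ i) ` {..j}"
    using divides_primepow_nat[OF assms] by auto
  have "inj_on (\<lambda>i. p ^ i) {..j}"
    using assms prime_gt_1_nat by (auto intro!: inj_onI simp: power_inject_exp)
  thus ?thesis unfolding sigma_def eq by (simp add: sum.reindex)
qed

lemma geom: "(p - 1) * (\<Sum>i<c. p ^ i) + 1 = (p::nat) ^ c" if "p \<ge> 1"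
  using that
proof (induction c)
  case 0 then show ?case by simp
next
  case (Suc c)
  have "(p - 1) * (\<Sum>i<Suc c. p ^ i) + 1 = ((p - 1) * (\<Sum>i<c. p ^ i) + 1) + (p-1) * p^c"
    by (simp add: algebra_simps)
  also have "\<dots> = p^c + (p-1)*p^c" using Suc by simp
  also have "\<dots> = p ^ Suc c" using Suc.prems by (simp add: algebra_simps)
  finally show ?case .
qed


lemma factor_lemma:
  fixes q x :: nat
  assumes "prime q" "x > 0" "q dvd sigma x"
  shows "\<exists>p j y. prime p \<and> j \<ge> 1 \<and> x = p ^ j * y \<and> coprime (p ^ j) y \<and> q dvd sigma (p ^ j)"
  using assms(2,3)
proof (induction x rule: less_induct)
  case (less x)
  show ?case
  proof (cases "x = 1")
    case True
    with less.prems have "q dvd 1" using sigma_one by metis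
    with assms(1) have False using not_prime_unit by blast
    thus ?thesis ..
  next
    case False
    then obtain p where p: "prime p" "p dvd x" using prime_factor_nat by blast
    define j where "j = multiplicity p x"
    obtain y where y: "x = p ^ j * y" "\<not> p dvd y"
    proof -
      have "x \<noteq> 0" "\<not> is_unit p" using less.prems p not_prime_unit by auto
      from multiplicity_decompose'[OF this] that show ?thesis unfolding j_def by blast
    qed
    have j1: "j \<ge> 1"
    proof -
      have "x \<noteq> 0" "\<not> is_unit p" using less.prems p not_prime_unit by auto
      from multiplicity_gt_zero_iff[OF this] p(2) show ?thesis unfolding j_def by simp
    qed
    have cop: "coprime (p ^ j) y"
      using y(2) p(1) by (simp add: prime_imp_coprime coprime_power_left_iff)
    have ypos: "y > 0" using y less.prems by (metis gr0I mult_0_right)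
    have "sigma x = sigma (p ^ j) * sigma y"
      using y cop ypos p by (simp add: sigma_mult prime_gt_0_nat)
    with less.prems assms(1) have "q dvd sigma (p ^ j) \<or> q dvd sigma y"
      by (simp add: prime_dvd_mult_iff)
    thus ?thesis
    proof
      assume "q dvd sigma (p ^ j)"
      thus ?thesis using p j1 y cop by blast
    next
      assume hq: "q dvd sigma y"
      have "y < x"
      proof -
        have "p ^ j > 1" using p j1 using one_less_power[of p j] prime_gt_1_nat[of p] by simp
        thus ?thesis using y ypos by simp
      qed
      from less.IH[OF this ypos hq] obtain p' j' y' where
        h: "prime p'" "j' \<ge> 1" "y = p' ^ j' * y'" "coprime (p' ^ j') y'" "q dvd sigma (p' ^ j')"
        by blast
      have "coprime (p' ^ j') (p ^ j)"
        using cop h(3) by (metis coprime_commute coprime_mult_right_iff)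
      hence "coprime (p' ^ j') (p ^ j * y')" using h(4) by simp
      moreover have "x = p' ^ j' * (p ^ j * y')" using y h by (simp add: ac_simps)
      ultimately show ?thesis using h by blast
    qed
  qed
qed


lemma sigma_pp_bound:
  assumes "prime p" "p \<ge> 3"
  shows "2 * sigma (p ^ j) < 3 * p ^ j"
proof -
  define S where "S = (\<Sum>i<Suc j. p ^ i)"
  have sS: "sigma (p ^ j) = S" unfolding S_def using sigma_primepow[OF assms(1)]
    by (simp add: lessThan_Suc_atMost)
  have g: "(p - 1) * S + 1 = p * p ^ j" using geom[of p "Suc j"] assms unfolding S_def by simp
  show ?thesis
  proof (rule ccontr)
    assume "\<not> ?thesis"
    hence "3 * p ^ j \<le> 2 * S" using sS by simp
    hence "(p - 1) * (3 * p ^ j) \<le> (p - 1) * (2 * S)" by simp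
    also have "\<dots> = 2 * (p * p ^ j) - 2" using g by simp
    finally have "(p - 1) * (3 * p ^ j) + 2 \<le> 2 * (p * p ^ j)"
      using g by linarith
    moreover have "p * p ^ j \<ge> 3 * p ^ j" using assms by simp
    moreover have "(p - 1) * (3 * p ^ j) = 3 * (p * p ^ j) - 3 * p ^ j"
      by (simp add: diff_mult_distrib algebra_simps)
    ultimately show False by linarith
  qed
qed

lemma T_bound:
  assumes "p \<ge> (3::nat)"
  shows "2 * (\<Sum>i<c. p ^ i) < p ^ c"
proof -
  have g: "(p - 1) * (\<Sum>i<c. p ^ i) + 1 = p ^ c" using geom[of p c] assms by simp
  have "2 * (\<Sum>i<c. p ^ i) \<le> (p - 1) * (\<Sum>i<c. p ^ i)" using assms by (intro mult_right_mono) auto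
  thus ?thesis using g by linarith
qed

lemma T_mod:
  assumes "c \<ge> 1"
  shows "(\<Sum>i<c. (p::nat) ^ i) = 1 + p * (\<Sum>i<c - 1. p ^ i)"
proof -
  obtain c' where "c = Suc c'" using assms by (cases c) auto
  thus ?thesis by (simp only: sum.lessThan_Suc_shift) (simp add: sum_distrib_left)
qed

lemma split_sum:
  assumes "c \<le> j"
  shows "\<exists>R. (\<Sum>i\<le>j. (p::nat) ^ i) = (\<Sum>i<c. p ^ i) + p ^ c * R"
proof -
  have "{..j} = {..<c} \<union> {c..j}" using assms by auto
  hence "(\<Sum>i\<le>j. p ^ i) = (\<Sum>i<c. p ^ i) + (\<Sum>i\<in>{c..j}. p ^ i)"
    by (simp add: sum.union_disjoint ivl_disj_int)
  moreover have "p ^ c dvd (\<Sum>i\<in>{c..j}. p ^ i)"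
    by (intro dvd_sum) (auto simp: le_imp_power_dvd)
  ultimately show ?thesis by (auto elim!: dvdE)
qed


lemma key:
  fixes q p j u :: nat
  assumes q: "prime q" and p: "prime p" "p \<ge> 3" and u: "u > 0"
    and cop: "coprime (p ^ j) u" and qd: "q dvd sigma (p ^ j)"
    and E0: "(q + 1) * sigma (p ^ j) * sigma u = 2 * q * (p ^ j * u)"
  shows "q ^ 2 < 3 * (p ^ j * u)"
proof -
  define A where "A = p ^ j"
  have Apos: "A > 0" unfolding A_def using p prime_gt_0_nat by simp
  obtain s where s: "sigma A = q * s" using qd unfolding A_def by (auto elim!: dvdE)
  have spos: "s > 0" using s sigma_pos[OF Apos] by (cases s) auto
  have qpos: "q > 0" using q prime_gt_0_nat by simp
  have su_pos: "sigma u > 0" using sigma_pos[OF u] .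
  have E: "(q + 1) * s * sigma u = 2 * A * u"
  proof -
    have "q * ((q + 1) * s * sigma u) = q * (2 * A * u)"
      using E0 s unfolding A_def[symmetric] by (simp add: ac_simps)
    thus ?thesis using qpos by simp
  qed
  define g where "g = gcd (q + 1) A"
  define B where "B = (q + 1) div g"
  define C where "C = A div g"
  have gpos: "g > 0" unfolding g_def using Apos by simp
  have qB: "q + 1 = g * B" unfolding B_def g_def by simp
  have AC: "A = g * C" unfolding C_def g_def by simp
  have copBC: "coprime B C" unfolding B_def C_def g_def
    by (rule div_gcd_coprime) simp
  have Bpos: "B > 0" using qB by (cases B) auto
  have E2: "B * s * sigma u = 2 * C * u"
  proof -
    have "g * B * s * sigma u = 2 * (g * C) * u"
      using E by (simp only: qB AC)
    hence "g * (B * s * sigma u) = g * (2 * C * u)"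
      by (simp only: ac_simps)
    thus ?thesis using gpos by simp
  qed
  have "B dvd C * (2 * u)" using E2 by (metis dvd_triv_left mult.assoc mult.left_commute)
  hence "B dvd 2 * u" using copBC by (simp add: coprime_dvd_mult_right_iff)
  then obtain w where w: "2 * u = B * w" by (auto elim!: dvdE)
  have wpos: "w > 0" using w u by (cases w) auto
  have Cw: "s * sigma u = C * w"
  proof -
    have "B * (s * sigma u) = B * (C * w)" using E2 w by (simp add: ac_simps)
    thus ?thesis using Bpos by simp
  qed
  have gsw: "g \<le> s * w"
  proof (cases "g = 1")
    case True
    thus ?thesis using spos wpos by (simp add: Suc_le_eq)
  next
    case False
    hence g1: "g > 1" using gpos by simp
    have "g dvd p ^ j" unfolding g_def A_def by simp
    then obtain c where c: "c \<le> j" "g = p ^ c" using divides_primepow_nat[OF p(1)] by blast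
    have c1: "c \<ge> 1" using c g1 by (cases c) auto
    define T where "T = (\<Sum>i<c. p ^ i)"
    obtain R where R: "sigma A = T + g * R"
      using split_sum[OF c(1), of p] sigma_primepow[OF p(1), of j] c unfolding T_def A_def by auto
    have "g dvd (q + 1) * s" using qB by simp
    moreover have "(q + 1) * s = T + s + g * R" using s R by (simp add: algebra_simps)
    ultimately have "g dvd T + s + g * R" by metis
    hence gTs: "g dvd T + s" by (simp add: dvd_add_left_iff)
    hence "g \<le> T + s" using spos by (intro dvd_imp_le) auto
    moreover have "2 * T < g" using T_bound[OF p(2), of c] c unfolding T_def by simp
    ultimately have g2s: "g < 2 * s" by linarith
    have "w \<ge> 2"
    proof (rule ccontr)
      assume "\<not> w \<ge> 2"
      hence w1: "w = 1" using wpos by simp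
      hence "s dvd C" using Cw by (metis dvd_triv_left mult_1_right)
      moreover have "C dvd p ^ j" using AC unfolding A_def by (metis dvd_triv_right)
      ultimately have "s dvd p ^ j" by (rule dvd_trans)
      then obtain i where i: "s = p ^ i" using divides_primepow_nat[OF p(1)] by blast
      show False
      proof (cases i)
        case 0 thus False using i g2s g1 by simp
      next
        case (Suc i')
        hence ps: "p dvd s" using i by simp
        have "p dvd g" using c c1 by (simp add: dvd_power)
        hence "p dvd T + s" using gTs by (rule dvd_trans)
        hence "p dvd T" using ps by (simp add: dvd_add_left_iff)
        hence "p dvd 1 + p * (\<Sum>i<c - 1. p ^ i)" using T_mod[OF c1, of p] unfolding T_def by simp
        moreover have "p dvd p * (\<Sum>i<c - 1. p ^ i)" by simp
        ultimately have "p dvd 1" using dvd_add_left_iff by blast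
        thus False using p by simp
      qed
    qed
    hence "2 * s \<le> s * w" by simp
    thus ?thesis using g2s by linarith
  qed
  have "2 * sigma A < 3 * A" unfolding A_def by (rule sigma_pp_bound[OF p])
  also have "A \<le> s * w * C" using AC gsw by simp
  also have "s * w * C = s * (s * sigma u)" using Cw by (simp add: ac_simps)
  finally have "s * (2 * q) < s * (3 * s * sigma u)" using s by (simp add: ac_simps)
  hence lt: "2 * q < 3 * s * sigma u" using spos by simp
  have "2 * q ^ 2 \<le> (2 * q) * (q + 1)" by (simp add: power2_eq_square)
  also have "\<dots> < (3 * s * sigma u) * (q + 1)" using lt by (intro mult_strict_right_mono) auto
  also have "\<dots> = 3 * ((q + 1) * s * sigma u)" by (simp only: ac_simps)
  also have "\<dots> = 3 * (2 * A * u)" using E by simp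
  finally show ?thesis unfolding A_def by (simp add: mult.commute)
qed


theorem lemma3:
  fixes N q k n :: nat
  assumes "odd N" and "perfect N" and "eulerian_form N q k n"
  shows "real q < real n * sqrt 3"
proof -
  have N: "N = q ^ k * n ^ 2" and q: "prime q" and k4: "k mod 4 = 1" and n0: "n > 0"
    and cqn: "coprime q n"
    using assms(3) unfolding eulerian_form_def by auto
  have sN: "sigma N = 2 * N" using assms(2) unfolding perfect_def by auto
  have qpos: "q > 0" using q prime_gt_0_nat by simp
  have oddn2: "odd (n ^ 2)" using assms(1) N by simp
  have cop: "coprime (q ^ k) (n ^ 2)" using cqn by simp
  have eq: "sigma (q ^ k) * sigma (n ^ 2) = 2 * q ^ k * n ^ 2"
    using sigma_mult[OF cop] qpos n0 sN N by simp
  have main: "q ^ 2 < 3 * n ^ 2"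
  proof (cases "k = 1")
    case True
    have sq: "sigma q = q + 1" using sigma_primepow[OF q, of 1] by simp
    have E1: "(q + 1) * sigma (n ^ 2) = 2 * q * n ^ 2" using eq True sq by simp
    have "q dvd (q + 1) * sigma (n ^ 2)" using E1 by simp
    moreover have "coprime q (q + 1)" by simp
    ultimately have "q dvd sigma (n ^ 2)" using coprime_dvd_mult_right_iff by blast
    from factor_lemma[OF q _ this] n0 obtain p j y where
      h: "prime p" "j \<ge> 1" "n ^ 2 = p ^ j * y" "coprime (p ^ j) y" "q dvd sigma (p ^ j)"
      by auto
    have "p dvd p ^ j" using h(2) by (simp add: dvd_power)
    hence "p dvd n ^ 2" using h(3) by (metis dvd_mult2)
    hence "odd p" using oddn2 using dvd_trans by blast
    hence p3: "p \<ge> 3" using h(1) prime_ge_2_nat[of p]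
      by (metis dvd_refl le_antisym not_less_eq_eq numeral_2_eq_2 numeral_3_eq_3)
    have ypos: "y > 0" using h(3) n0 by (cases y) auto
    have "sigma (n ^ 2) = sigma (p ^ j) * sigma y"
      using h(1,3,4) ypos sigma_mult prime_gt_0_nat by simp
    hence "(q + 1) * sigma (p ^ j) * sigma y = 2 * q * (p ^ j * y)"
      using E1 h(3) by (simp add: ac_simps)
    from key[OF q h(1) p3 ypos h(4) h(5) this] show ?thesis using h(3) by simp
  next
    case False
    hence k5: "k \<ge> 5" using k4 by presburger
    have sk: "sigma (q ^ k) = 1 + q * (\<Sum>i<k. q ^ i)"
      using sigma_primepow[OF q, of k] T_mod[of "Suc k" q] by (simp add: lessThan_Suc_atMost)
    have "coprime q (sigma (q ^ k))" unfolding sk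
    proof (rule coprimeI)
      fix d assume "d dvd q" "d dvd 1 + q * (\<Sum>i<k. q ^ i)"
      moreover from \<open>d dvd q\<close> have "d dvd q * (\<Sum>i<k. q ^ i)" by simp
      ultimately have "d dvd 1" using dvd_add_left_iff by blast
      thus "is_unit d" by simp
    qed
    hence c2: "coprime (q ^ k) (sigma (q ^ k))" by simp
    have "q ^ k dvd sigma (q ^ k) * sigma (n ^ 2)" using eq by simp
    hence "q ^ k dvd sigma (n ^ 2)" using c2 by (simp add: coprime_dvd_mult_right_iff)
    hence le1: "q ^ k \<le> sigma (n ^ 2)" using sigma_pos[of "n^2"] n0 by (intro dvd_imp_le) auto
    have "sigma (q ^ k) * q ^ k \<le> sigma (q ^ k) * sigma (n ^ 2)" using le1 by simp
    also have "\<dots> = (2 * n ^ 2) * q ^ k" using eq by simp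
    finally have le2: "sigma (q ^ k) \<le> 2 * n ^ 2" using qpos by simp
    have "(\<Sum>i\<in>{0,k}. q ^ i) \<le> (\<Sum>i\<le>k. q ^ i)" by (intro sum_mono2) auto
    hence "1 + q ^ k \<le> sigma (q ^ k)" using sigma_primepow[OF q, of k] k5 by simp
    moreover have "q ^ 2 \<le> q ^ k" using k5 qpos by (intro power_increasing) auto
    ultimately show ?thesis using le2 n0 by simp
  qed
  have "(real q) ^ 2 < (real n * sqrt 3) ^ 2"
  proof -
    have "(real q) ^ 2 = real (q ^ 2)" by simp
    also have "\<dots> < real (3 * n ^ 2)" using main by linarith
    also have "\<dots> = (real n * sqrt 3) ^ 2" by (simp add: power_mult_distrib)
    finally show ?thesis .
  qed
  thus ?thesis by (rule power2_less_imp_less) simp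
qed

end
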